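(* Let $f(X)=X^n+a_{n-1}X^{n-1}+\dots+a_1X+a_0\in A[X]$ with $n\geq 1$, $p\nmid n$ and $a_0\neq 0$. Write $l=v(a_0)$ and assume $v(a_{n-i})>il/n$ for all $i=1,\dots,n-1$. Then the number $R$ of roots of $f$ in $K^\ast=K\setminus\{0\}$ equals the number of roots of $X^n+a_0$ in $K^\ast$. Moreover, if $n\nmid l$ then $R=0$, and if $n\mid l$ then $R=\gcd(n,q-1)$ if $-\delta(a_0)$ is an $n$-th power in $\kappa$, and $R=0$ otherwise.
   Context: $K$ is a field complete with respect to a non-archimedean discrete valuation $v$, normalized by $v(\pi)=1$ for a uniformizer $\pi$ of the valuation ring $A=\{x\in K: v(x)\geq 0\}$; the residue field $\kappa=A/\pi A$ is finite with $q$ elements and characteristic $p$. For $a\in K^\ast$ with $v(a)=l$, the first non-zero digit of $a$ is $\delta(a)=\overline{a/\pi^l}\in\kappa^\ast$, the residue class of $a/\pi^l$. *)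

theory Defs
  imports "HOL-Computational_Algebra.Polynomial" "HOL-Computational_Algebra.Primes"
begin

text \<open>A normalized discrete valuation on a field. The value at 0 (conventionally infinity)
  is never used: every condition is guarded by nonzeroness.\<close>
definition discrete_valuation :: "('a::field \<Rightarrow> int) \<Rightarrow> bool" where
  "discrete_valuation v \<longleftrightarrow>
     (\<forall>x y. x \<noteq> 0 \<longrightarrow> y \<noteq> 0 \<longrightarrow> v (x * y) = v x + v y) \<and>
     (\<forall>x y. x \<noteq> 0 \<longrightarrow> y \<noteq> 0 \<longrightarrow> x + y \<noteq> 0 \<longrightarrow> v (x + y) \<ge> min (v x) (v y)) \<and>
     (\<exists>u. u \<noteq> 0 \<and> v u = 1)"

definition val_cauchy :: "('a::field \<Rightarrow> int) \<Rightarrow> (nat \<Rightarrow> 'a) \<Rightarrow> bool" where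
  "val_cauchy v s \<longleftrightarrow> (\<forall>N::int. \<exists>M. \<forall>m\<ge>M. \<forall>k\<ge>M. s m = s k \<or> v (s m - s k) \<ge> N)"

definition val_converges :: "('a::field \<Rightarrow> int) \<Rightarrow> (nat \<Rightarrow> 'a) \<Rightarrow> 'a \<Rightarrow> bool" where
  "val_converges v s L \<longleftrightarrow> (\<forall>N::int. \<exists>M. \<forall>m\<ge>M. s m = L \<or> v (s m - L) \<ge> N)"

definition val_complete :: "('a::field \<Rightarrow> int) \<Rightarrow> bool" where
  "val_complete v \<longleftrightarrow> (\<forall>s. val_cauchy v s \<longrightarrow> (\<exists>L. val_converges v s L))"

definition val_ring :: "('a::field \<Rightarrow> int) \<Rightarrow> 'a set" where
  "val_ring v = {x. x = 0 \<or> v x \<ge> 0}"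

definition max_ideal :: "('a::field \<Rightarrow> int) \<Rightarrow> 'a set" where
  "max_ideal v = {x. x = 0 \<or> v x \<ge> 1}"

definition res_rel :: "('a::field \<Rightarrow> int) \<Rightarrow> ('a \<times> 'a) set" where
  "res_rel v = {(x, y). x \<in> val_ring v \<and> y \<in> val_ring v \<and> x - y \<in> max_ideal v}"

definition residue_field :: "('a::field \<Rightarrow> int) \<Rightarrow> 'a set set" where
  "residue_field v = val_ring v // res_rel v"

definition residue :: "('a::field \<Rightarrow> int) \<Rightarrow> 'a \<Rightarrow> 'a set" where
  "residue v x = res_rel v `` {x}"

definition first_digit :: "('a::field \<Rightarrow> int) \<Rightarrow> 'a \<Rightarrow> 'a \<Rightarrow> 'a set" where
  "first_digit v \<pi> a = residue v (a / \<pi> powi v a)"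

text \<open>A residue class c is an n-th power in kappa: c = b^n for some b in kappa
  (the n-th power of the class of b is the class of b^n).\<close>
definition is_nth_power_res :: "('a::field \<Rightarrow> int) \<Rightarrow> nat \<Rightarrow> 'a set \<Rightarrow> bool" where
  "is_nth_power_res v n c \<longleftrightarrow> (\<exists>b \<in> val_ring v. residue v (b ^ n) = c)"

end

theory Submission
  imports Defs "HOL-Algebra.Multiplicative_Group" "HOL-Algebra.QuotRing"
begin

hide_const (open) up_ring.coeff UnivPoly.monom

definition vge :: "('a::field \<Rightarrow> int) \<Rightarrow> int \<Rightarrow> 'a \<Rightarrow> bool" where
  "vge v N x \<longleftrightarrow> x = 0 \<or> v x \<ge> N"

locale dval = fixes v :: "'a::field \<Rightarrow> int" assumes dv: "discrete_valuation v"
begin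

lemma vmult: "x \<noteq> 0 \<Longrightarrow> y \<noteq> 0 \<Longrightarrow> v (x*y) = v x + v y"
  using dv unfolding discrete_valuation_def by blast

lemma vadd: "x \<noteq> 0 \<Longrightarrow> y \<noteq> 0 \<Longrightarrow> x + y \<noteq> 0 \<Longrightarrow> v (x+y) \<ge> min (v x) (v y)"
  using dv unfolding discrete_valuation_def by blast

lemma v1[simp]: "v 1 = 0" using vmult[of 1 1] by simp

lemma vm1[simp]: "v (-1) = 0" using vmult[of "-1" "-1"] by simp

lemma vminus[simp]: "v (-x) = v x"
proof (cases "x = 0")
  case False
  then show ?thesis using vmult[of "-1" x] by simp
qed simp

lemma vinv: "x \<noteq> 0 \<Longrightarrow> v (inverse x) = - v x"
  using vmult[of x "inverse x"] by simp

lemma vdiv: "x \<noteq> 0 \<Longrightarrow> y \<noteq> 0 \<Longrightarrow> v (x / y) = v x - v y"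
  by (simp add: divide_inverse vmult vinv)

lemma vpow: "x \<noteq> 0 \<Longrightarrow> v (x ^ k) = int k * v x"
  by (induction k) (auto simp: vmult algebra_simps)

lemma vpowi: "x \<noteq> 0 \<Longrightarrow> v (x powi k) = k * v x"
  by (auto simp: power_int_def vpow vinv)

lemma vge_0[simp]: "vge v N 0" by (simp add: vge_def)

lemma vge_mono: "M \<le> N \<Longrightarrow> vge v N x \<Longrightarrow> vge v M x"
  by (auto simp: vge_def)

lemma vge_uminus[simp]: "vge v N (-x) = vge v N x"
  by (auto simp: vge_def)

lemma vge_add: "vge v N x \<Longrightarrow> vge v N y \<Longrightarrow> vge v N (x + y)"
  unfolding vge_def using vadd[of x y] by (cases "x = 0"; cases "y = 0"; cases "x + y = 0") auto

lemma vge_diff: "vge v N x \<Longrightarrow> vge v N y \<Longrightarrow> vge v N (x - y)"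
  using vge_add[of N x "-y"] by simp

lemma vge_mult: "vge v N x \<Longrightarrow> vge v M y \<Longrightarrow> vge v (N + M) (x * y)"
  unfolding vge_def by (cases "x = 0"; cases "y = 0") (auto simp: vmult)

lemma vge_mult0: "vge v N x \<Longrightarrow> vge v 0 y \<Longrightarrow> vge v N (x * y)"
  using vge_mult[of N x 0 y] by simp

lemma vge_mult0': "vge v 0 x \<Longrightarrow> vge v N y \<Longrightarrow> vge v N (x * y)"
  using vge_mult[of 0 x N y] by simp

lemma vge_sum: "(\<And>i. i \<in> S \<Longrightarrow> vge v N (f i)) \<Longrightarrow> vge v N (sum f S)"
  by (induction S rule: infinite_finite_induct) (auto intro: vge_add)

lemma vge_one[simp]: "vge v 0 1" by (simp add: vge_def)

lemma vge_pow: "vge v 0 x \<Longrightarrow> vge v 0 (x ^ k)"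
  by (induction k) (auto intro: vge_mult0)

lemma vge_pow1: "vge v 1 x \<Longrightarrow> k \<ge> 1 \<Longrightarrow> vge v 1 (x ^ k)"
proof (induction k)
  case (Suc k)
  have "vge v 0 x" using Suc.prems(1) vge_mono[of 0 1 x] by simp
  then have "vge v 0 (x^k)" by (rule vge_pow)
  then show ?case using vge_mult0[OF Suc.prems(1)] by (metis power_Suc)
qed simp

lemma vge_of_nat[simp]: "vge v 0 (of_nat k)"
  by (induction k) (auto intro: vge_add)

lemma vge_of_int[simp]: "vge v 0 (of_int k)"
  by (cases k rule: int_cases) (auto simp del: of_nat_Suc)

lemma strict: assumes "x \<noteq> 0" "vge v (v x + 1) y" shows "x + y \<noteq> 0 \<and> v (x + y) = v x"
proof (cases "y = 0")
  case False
  then have vy: "v y > v x" using assms by (auto simp: vge_def)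
  have nz: "x + y \<noteq> 0"
  proof
    assume "x + y = 0" then have "y = - x" by (simp add: eq_neg_iff_add_eq_0 add.commute)
    then show False using vy by simp
  qed
  have "v (x + y) \<ge> v x" using vadd[OF assms(1) False nz] vy by simp
  moreover have "v x \<ge> min (v (x+y)) (v (-y))"
    using vadd[OF nz, of "-y"] False assms(1) by simp
  ultimately show ?thesis using nz vy by auto
qed (use assms in simp)

lemma unit_add: "x \<noteq> 0 \<Longrightarrow> v x = 0 \<Longrightarrow> vge v 1 h \<Longrightarrow> x + h \<noteq> 0 \<and> v (x + h) = 0"
  using strict[of x h] by simp

lemma vge_div_unit: "vge v N x \<Longrightarrow> y \<noteq> 0 \<Longrightarrow> v y = 0 \<Longrightarrow> vge v N (x / y)"
  by (cases "x = 0") (auto simp: vge_def vdiv)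

lemma vge_iff: "x \<noteq> 0 \<Longrightarrow> vge v N x \<longleftrightarrow> v x \<ge> N" by (simp add: vge_def)

end

context dval begin

lemma coeffs_pCons: "(\<forall>i. vge v N (coeff (pCons a p) i)) \<Longrightarrow> vge v N a \<and> (\<forall>i. vge v N (coeff p i))"
  by (metis coeff_pCons_0 coeff_pCons_Suc)

lemma poly_vge: "(\<forall>i. vge v N (coeff g i)) \<Longrightarrow> vge v 0 y \<Longrightarrow> vge v N (poly g y)"
proof (induction g rule: pCons_induct)
  case (pCons a p)
  then show ?case using coeffs_pCons[OF pCons.prems(1)]
    by (auto intro!: vge_add vge_mult0')
qed simp

lemma pderiv_vge: "(\<forall>i. vge v 0 (coeff g i)) \<Longrightarrow> (\<forall>i. vge v 0 (coeff (pderiv g) i))"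
  by (auto simp: coeff_pderiv simp del: of_nat_Suc intro!: vge_mult0')

lemma D1: "(\<forall>i. vge v 0 (coeff g i)) \<Longrightarrow> vge v 0 x \<Longrightarrow> vge v 0 y \<Longrightarrow>
   \<exists>w. vge v 0 w \<and> poly g x - poly g y = (x - y) * w"
proof (induction g rule: pCons_induct)
  case 0
  then show ?case by (intro exI[of _ 0]) simp
next
  case (pCons a p)
  note c = coeffs_pCons[OF pCons.prems(1)]
  from pCons.IH c pCons.prems obtain w where w: "vge v 0 w" "poly p x - poly p y = (x - y) * w" by blast
  have "poly (pCons a p) x - poly (pCons a p) y = (x - y) * (x * w + poly p y)"
  proof -
    have e: "poly p x = poly p y + (x - y) * w" using w(2) by (simp add: algebra_simps)
    show ?thesis by (simp add: e algebra_simps)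
  qed
  moreover have "vge v 0 (x * w + poly p y)"
    using c pCons.prems w by (auto intro!: vge_add vge_mult0' poly_vge)
  ultimately show ?case by blast
qed

lemma D2: "(\<forall>i. vge v 0 (coeff g i)) \<Longrightarrow> vge v 0 x \<Longrightarrow> vge v 0 y \<Longrightarrow>
   \<exists>w. vge v 0 w \<and> poly g x - poly g y - poly (pderiv g) y * (x - y) = (x - y)^2 * w"
proof (induction g rule: pCons_induct)
  case 0
  then show ?case by (intro exI[of _ 0]) simp
next
  case (pCons a p)
  note c = coeffs_pCons[OF pCons.prems(1)]
  from pCons.IH c pCons.prems obtain w where w: "vge v 0 w"
     "poly p x - poly p y - poly (pderiv p) y * (x - y) = (x - y)^2 * w" by blast
  have e: "poly p x = poly p y + poly (pderiv p) y * (x - y) + (x - y)^2 * w"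
    using w(2) by (simp add: algebra_simps)
  have "poly (pCons a p) x - poly (pCons a p) y - poly (pderiv (pCons a p)) y * (x - y)
       = (x - y)^2 * (x * w + poly (pderiv p) y)"
    by (simp add: pderiv_pCons e) (simp add: algebra_simps power2_eq_square)
  moreover have "vge v 0 (x * w + poly (pderiv p) y)"
    using c pCons.prems w by (auto intro!: vge_add vge_mult0' poly_vge pderiv_vge)
  ultimately show ?case by blast
qed

end

locale cdval = dval + assumes compl: "val_complete v"
begin

lemma hensel:
  assumes cg: "\<forall>i. vge v 0 (coeff g i)" and y0: "vge v 0 y0" and g0: "vge v 1 (poly g y0)"
    and d0: "poly (pderiv g) y0 \<noteq> 0" "v (poly (pderiv g) y0) = 0"
  shows "\<exists>y. vge v 0 y \<and> vge v 1 (y - y0) \<and> poly g y = 0"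
proof -
  define d where "d = (\<lambda>y. poly (pderiv g) y)"
  define Y where "Y = rec_nat y0 (\<lambda>k y. y - poly g y / d y)"
  have Y0: "Y 0 = y0" by (simp add: Y_def)
  have YS: "Y (Suc k) = Y k - poly g (Y k) / d (Y k)" for k by (simp add: Y_def)
  have cd: "\<forall>i. vge v 0 (coeff (pderiv g) i)" using pderiv_vge[OF cg] .
  have unit: "d y \<noteq> 0 \<and> v (d y) = 0" if a: "vge v 0 y" "vge v 1 (y - y0)" for y
  proof -
    obtain w where w: "vge v 0 w" "d y - d y0 = (y - y0) * w"
      using D1[OF cd a(1) y0] unfolding d_def by blast
    have "vge v 1 ((y - y0) * w)" using vge_mult0[OF a(2) w(1)] .
    moreover have "d y = d y0 + (y - y0) * w" using w(2) by (simp add: algebra_simps)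
    ultimately show ?thesis using unit_add[of "d y0" "(y - y0) * w"] d0 unfolding d_def by simp
  qed
  have inv: "vge v 0 (Y k) \<and> vge v 1 (Y k - y0) \<and> vge v (int k + 1) (poly g (Y k))" for k
  proof (induction k)
    case 0
    then show ?case using y0 g0 Y0 by simp
  next
    case (Suc k)
    define y where "y = Y k"
    define h where "h = - poly g y / d y"
    have IH: "vge v 0 y" "vge v 1 (y - y0)" "vge v (int k + 1) (poly g y)" using Suc.IH y_def by auto
    have u: "d y \<noteq> 0" "v (d y) = 0" using unit[OF IH(1,2)] by auto
    have hk: "vge v (int k + 1) h" unfolding h_def using vge_div_unit[OF IH(3) u] by simp
    have h0: "vge v 0 h" "vge v 1 h" using vge_mono[OF _ hk] by auto
    have YSk: "Y (Suc k) = y + h" using YS[of k] by (simp add: y_def h_def)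
    obtain w where w: "vge v 0 w" "poly g (y + h) - poly g y - d y * ((y + h) - y) = ((y + h) - y)^2 * w"
      using D2[OF cg vge_add[OF IH(1) h0(1)] IH(1)] unfolding d_def by blast
    have "d y * h = - poly g y" using u(1) by (simp add: h_def)
    then have gx: "poly g (y + h) = (h * h) * w" using w(2) by (simp add: power2_eq_square)
    have "vge v ((int k + 1) + (int k + 1)) (h * h)" using vge_mult[OF hk hk] .
    then have "vge v (int (Suc k) + 1) (h * h)" by (rule vge_mono[rotated]) simp
    then have "vge v (int (Suc k) + 1) (poly g (y + h))" unfolding gx using vge_mult0 w(1) by blast
    moreover have "vge v 0 (y + h)" using vge_add[OF IH(1) h0(1)] .
    moreover have "vge v 1 (y + h - y0)" using vge_add[OF IH(2) h0(2)] by (simp add: algebra_simps)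
    ultimately show ?case using YSk by simp
  qed
  have stp: "vge v (int k + 1) (Y (Suc k) - Y k)" for k
  proof -
    have "vge v 0 (Y k)" "vge v 1 (Y k - y0)" "vge v (int k + 1) (poly g (Y k))" using inv[of k] by auto
    then have "vge v (int k + 1) (- poly g (Y k) / d (Y k))" using unit vge_div_unit by simp
    then show ?thesis using YS[of k] by simp
  qed
  have tail: "vge v (int M + 1) (Y j - Y M)" if "M \<le> j" for M j
    using that
  proof (induction j rule: dec_induct)
    case base then show ?case by simp
  next
    case (step j)
    have "vge v (int M + 1) (Y (Suc j) - Y j)" using vge_mono[OF _ stp[of j]] step.hyps by simp
    moreover have "Y (Suc j) - Y M = (Y j - Y M) + (Y (Suc j) - Y j)" by simp
    ultimately show ?case using vge_add[OF step.IH] by metis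
  qed
  have cauchy: "val_cauchy v Y"
    unfolding val_cauchy_def
  proof
    fix N :: int
    show "\<exists>M. \<forall>m\<ge>M. \<forall>k\<ge>M. Y m = Y k \<or> N \<le> v (Y m - Y k)"
    proof (intro exI allI impI)
      fix m k assume "nat N \<le> m" "nat N \<le> k"
      have "vge v (int (nat N) + 1) (Y m - Y (nat N) - (Y k - Y (nat N)))"
        using vge_diff[OF tail tail] \<open>nat N \<le> m\<close> \<open>nat N \<le> k\<close> by blast
      then have "vge v N (Y m - Y (nat N) - (Y k - Y (nat N)))" by (rule vge_mono[rotated]) simp
      then have "vge v N (Y m - Y k)" by simp
      then show "Y m = Y k \<or> N \<le> v (Y m - Y k)" by (auto simp: vge_def)
    qed
  qed
  then obtain L where L: "val_converges v Y L" using compl unfolding val_complete_def by blast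
  have conv: "\<exists>M. \<forall>m\<ge>M. vge v N (Y m - L)" for N
    using L unfolding val_converges_def vge_def by (metis eq_iff_diff_eq_0)
  obtain M0 where M0: "\<forall>m\<ge>M0. vge v 1 (Y m - L)" using conv by blast
  have YM: "vge v 0 (Y M0)" "vge v 1 (Y M0 - y0)" using inv by auto
  have L0: "vge v 0 L"
    using vge_diff[OF YM(1) vge_mono[OF _ M0[rule_format, OF order_refl]]] by simp
  have L1: "vge v 1 (L - y0)"
    using vge_diff[OF YM(2) M0[rule_format, OF order_refl]] by (simp add: algebra_simps)
  have "poly g L = 0"
  proof (rule ccontr)
    assume nz: "poly g L \<noteq> 0"
    define t where "t = v (poly g L)"
    obtain M where M: "\<forall>m\<ge>M. vge v (t + 1) (Y m - L)" using conv by blast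
    define m where "m = max M (nat t)"
    have ym: "vge v 0 (Y m)" "vge v (int m + 1) (poly g (Y m))" using inv by auto
    obtain w where w: "vge v 0 w" "poly g (Y m) - poly g L = (Y m - L) * w"
      using D1[OF cg ym(1) L0] by blast
    have a: "vge v (t + 1) (poly g (Y m) - poly g L)"
      unfolding w(2) using vge_mult0[OF M[rule_format] w(1)] by (simp add: m_def)
    have b: "vge v (t + 1) (poly g (Y m))" using vge_mono[OF _ ym(2)] by (simp add: m_def)
    have "vge v (t + 1) (poly g L)" using vge_diff[OF b a] by simp
    then show False using nz by (simp add: vge_def t_def)
  qed
  then show ?thesis using L0 L1 by blast
qed

lemma hensel_uniq:
  assumes cg: "\<forall>i. vge v 0 (coeff g i)" and y: "vge v 0 y" and z: "vge v 0 z"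
    and yz: "vge v 1 (y - z)" and gy: "poly g y = 0" and gz: "poly g z = 0"
    and d0: "poly (pderiv g) z \<noteq> 0" "v (poly (pderiv g) z) = 0"
  shows "y = z"
proof -
  obtain w where w: "vge v 0 w" "poly g y - poly g z - poly (pderiv g) z * (y - z) = (y - z)^2 * w"
    using D2[OF cg y z] by blast
  have e: "(y - z) * (poly (pderiv g) z + (y - z) * w) = 0"
    using w(2) gy gz by (simp add: algebra_simps power2_eq_square)
  have "poly (pderiv g) z + (y - z) * w \<noteq> 0"
    using unit_add[OF d0 vge_mult0[OF yz w(1)]] by simp
  then show ?thesis using e by simp
qed

end

lemma arithA:
  fixes n i Va l t :: int
  assumes "0 < n" "0 \<le> i" "n * Va > (n - i) * l" "n * t > l"
  shows "Va + i * t > l"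
proof -
  have "i * (n * t) \<ge> i * l" using assms(2,4) by (simp add: mult_left_mono)
  then have "n * (Va + i * t) > n * l" using assms(3) by (simp add: algebra_simps)
  then show ?thesis using assms(1) by simp
qed

lemma arithB:
  fixes n i Va l t :: int
  assumes "0 < n" "i \<le> n" "n * Va > (n - i) * l" "n * t < l"
  shows "Va + i * t > n * t"
proof -
  have "(n - i) * l \<ge> (n - i) * (n * t)" using assms(2,4) by (simp add: mult_left_mono)
  then have "n * (Va + i * t) > n * (n * t)" using assms(3) by (simp add: algebra_simps)
  then show ?thesis using assms(1) by simp
qed

context dval begin

lemma newton:
  assumes n: "n \<ge> 1" and deg: "degree f = n" and lc: "coeff f n = 1" and a0: "coeff f 0 \<noteq> 0"
    and sl: "\<forall>j. 0 < j \<longrightarrow> j < n \<longrightarrow> coeff f j = 0 \<or> int n * v (coeff f j) > int (n - j) * v (coeff f 0)"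
    and x: "x \<noteq> 0" and root: "poly f x = 0"
  shows "int n * v x = v (coeff f 0)"
proof -
  define l where "l = v (coeff f 0)"
  define t where "t = v x"
  define F where "F = (\<lambda>i. coeff f i * x ^ i)"
  have P: "poly f x = (\<Sum>i\<le>n. F i)" unfolding F_def poly_altdef deg ..
  have vF: "v (F i) = v (coeff f i) + int i * t" if "coeff f i \<noteq> 0" for i
    using that x by (simp add: F_def vmult vpow t_def)
  have Fn: "F n = x ^ n" by (simp add: F_def lc)
  show ?thesis
  proof (rule ccontr)
    assume ne: "int n * v x \<noteq> v (coeff f 0)"
    show False
    proof (cases "int n * t > l")
      case True
      have "vge v (l + 1) (F i)" if "i \<in> {1..n}" for i
      proof (cases "coeff f i = 0")
        case False
        show ?thesis
        proof (cases "i = n")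
          case True
          then show ?thesis using \<open>int n * t > l\<close> x by (simp add: Fn vge_iff vpow t_def)
        next
          case False
          with that have "0 < i" "i < n" by auto
          then have "int n * v (coeff f i) > (int n - int i) * l"
            using sl \<open>coeff f i \<noteq> 0\<close> \<open>0 < i\<close> \<open>i < n\<close> by (auto simp: l_def of_nat_diff)
          then have "v (coeff f i) + int i * t > l"
            by (rule arithA[rotated 2]) (use n True in auto)
          then show ?thesis using vF[OF \<open>coeff f i \<noteq> 0\<close>] by (simp add: vge_def)
        qed
      qed (simp add: F_def)
      then have r: "vge v (l + 1) (\<Sum>i\<in>{1..n}. F i)" by (rule vge_sum)
      have "{..n} = insert 0 {1..n}" by auto
      then have "poly f x = F 0 + (\<Sum>i\<in>{1..n}. F i)" unfolding P by simp
      moreover have "F 0 = coeff f 0" by (simp add: F_def)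
      ultimately show False using strict[OF a0, of "\<Sum>i\<in>{1..n}. F i"] r root by (simp add: l_def)
    next
      case False
      then have lt: "int n * t < l" using ne by (simp add: t_def l_def)
      have "vge v (int n * t + 1) (F i)" if "i \<in> {..<n}" for i
      proof (cases "coeff f i = 0")
        case False
        show ?thesis
        proof (cases "i = 0")
          case True
          then show ?thesis using lt by (simp add: F_def vge_iff a0 l_def)
        next
          case False
          with that have "0 < i" "i < n" by auto
          then have "int n * v (coeff f i) > (int n - int i) * l"
            using sl \<open>coeff f i \<noteq> 0\<close> \<open>0 < i\<close> \<open>i < n\<close> by (auto simp: l_def of_nat_diff)
          then have "v (coeff f i) + int i * t > int n * t"
            by (rule arithB[rotated 2]) (use n lt \<open>i < n\<close> in auto)
          then show ?thesis using vF[OF \<open>coeff f i \<noteq> 0\<close>] by (simp add: vge_def)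
        qed
      qed (simp add: F_def)
      then have r: "vge v (int n * t + 1) (\<Sum>i\<in>{..<n}. F i)" by (rule vge_sum)
      have "poly f x = F n + (\<Sum>i\<in>{..<n}. F i)" unfolding P by (simp add: lessThan_Suc_atMost[symmetric] add.commute)
      moreover have "x ^ n \<noteq> 0" "v (x ^ n) = int n * t" using x by (auto simp: vpow t_def)
      ultimately show False using strict[of "x ^ n" "\<Sum>i\<in>{..<n}. F i"] r root Fn by simp
    qed
  qed
qed

end

definition valR :: "('a::field \<Rightarrow> int) \<Rightarrow> 'a ring" where
  "valR v = \<lparr>carrier = val_ring v, monoid.mult = (*), one = 1, zero = 0, add = (+)\<rparr>"

lemma val_ring_iff: "x \<in> val_ring v \<longleftrightarrow> vge v 0 x"
  by (auto simp: val_ring_def vge_def)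

lemma max_ideal_iff: "x \<in> max_ideal v \<longleftrightarrow> vge v 1 x"
  by (auto simp: max_ideal_def vge_def)

context dval begin

lemma vge_1_0: "vge v 1 x \<Longrightarrow> vge v 0 x" using vge_mono[of 0 1 x] by simp

lemma valR_simps[simp]: "carrier (valR v) = val_ring v" "mult (valR v) = (*)" "one (valR v) = 1"
  "zero (valR v) = 0" "add (valR v) = (+)"
  by (simp_all add: valR_def)

lemma cring_valR: "cring (valR v)"
proof -
  have a: "\<exists>y\<in>val_ring v. x + y = 0" if "vge v 0 x" for x
    using that by (intro bexI[of _ "-x"]) (simp_all add: val_ring_iff)
  show ?thesis
    apply unfold_locales
    apply (auto simp: val_ring_iff Units_def algebra_simps intro: vge_add vge_mult0 a)
    done
qed

lemma A_minus: "x \<in> carrier (valR v) \<Longrightarrow> a_inv (valR v) x = - x"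
proof -
  interpret cring "valR v" by (rule cring_valR)
  assume x: "x \<in> carrier (valR v)"
  then have "- x \<in> carrier (valR v)" by (simp add: val_ring_iff)
  moreover have "x \<oplus>\<^bsub>valR v\<^esub> (- x) = \<zero>\<^bsub>valR v\<^esub>" by simp
  ultimately show ?thesis using x by (metis minus_equality add.m_comm)
qed

lemma max_ideal_maximal: "maximalideal (max_ideal v) (valR v)"
proof -
  interpret cring "valR v" by (rule cring_valR)
  have sub: "max_ideal v \<subseteq> val_ring v"
    by (auto simp: max_ideal_iff val_ring_iff intro: vge_1_0)
  have id: "ideal (max_ideal v) (valR v)"
  proof (rule idealI)
    show "ring (valR v)" by (rule ring_axioms)
    show "subgroup (max_ideal v) (add_monoid (valR v))"
    proof (rule add.subgroupI)
      show "max_ideal v \<subseteq> carrier (valR v)" using sub by simp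
      have "0 \<in> max_ideal v" by (simp add: max_ideal_iff)
      then show "max_ideal v \<noteq> {}" by blast
    next
      fix a assume "a \<in> max_ideal v"
      then show "\<ominus>\<^bsub>valR v\<^esub> a \<in> max_ideal v"
        using A_minus[of a] sub by (auto simp: max_ideal_iff)
    next
      fix a b assume "a \<in> max_ideal v" "b \<in> max_ideal v"
      then show "a \<oplus>\<^bsub>valR v\<^esub> b \<in> max_ideal v"
        by (auto simp: max_ideal_iff intro: vge_add)
    qed
    fix a x assume "a \<in> max_ideal v" "x \<in> carrier (valR v)"
    then show "x \<otimes>\<^bsub>valR v\<^esub> a \<in> max_ideal v" "a \<otimes>\<^bsub>valR v\<^esub> x \<in> max_ideal v"
      by (auto simp: max_ideal_iff val_ring_iff intro: vge_mult0 vge_mult0')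
  qed
  show ?thesis
  proof (rule maximalidealI[OF id])
    have "1 \<notin> max_ideal v" by (simp add: max_ideal_iff vge_def)
    then show "carrier (valR v) \<noteq> max_ideal v" by (auto simp: val_ring_iff)
    fix J assume J: "ideal J (valR v)" "max_ideal v \<subseteq> J" "J \<subseteq> carrier (valR v)"
    interpret J: ideal J "valR v" by (rule J(1))
    show "J = max_ideal v \<or> J = carrier (valR v)"
    proof (cases "J \<subseteq> max_ideal v")
      case True then show ?thesis using J by auto
    next
      case False
      then obtain x where x: "x \<in> J" "x \<notin> max_ideal v" by auto
      then have xA: "vge v 0 x" using J(3) by (auto simp: val_ring_iff)
      with x have xu: "x \<noteq> 0" "v x = 0" by (auto simp: max_ideal_iff vge_def)
      then have "vge v 0 (inverse x)" by (simp add: vge_def vinv)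
      then have "x * inverse x \<in> J" using J.I_r_closed[of x "inverse x"] x by (simp add: val_ring_iff)
      then have one: "1 \<in> J" using xu by simp
      have "carrier (valR v) \<subseteq> J"
      proof
        fix a assume "a \<in> carrier (valR v)"
        then show "a \<in> J" using J.I_r_closed[OF one, of a] by simp
      qed
      then show ?thesis using J by auto
    qed
  qed
qed

end

lemma count_dvd:
  fixes m n :: nat assumes m: "m > 0"
  shows "card {i \<in> {..<m}. m dvd i * n} = gcd n m"
proof -
  define d where "d = gcd n m"
  have d0: "d > 0" using m by (simp add: d_def)
  obtain m' where m': "m = d * m'" using gcd_dvd2[of n m] unfolding d_def by (rule dvdE)
  obtain n' where n': "n = d * n'" using gcd_dvd1[of n m] unfolding d_def by (rule dvdE)
  have "gcd n m = d * gcd n' m'" unfolding n' m' by (rule gcd_mult_distrib_nat[symmetric])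
  then have "d = d * gcd n' m'" unfolding d_def[symmetric] .
  then have "gcd n' m' = 1" using d0 by simp
  then have cop: "coprime n' m'" by (simp add: coprime_iff_gcd_eq_1)
  have mp: "m' > 0" using m m' by simp
  have iff: "m dvd i * n \<longleftrightarrow> m' dvd i" for i
  proof -
    have "m dvd i * n \<longleftrightarrow> d * m' dvd d * (i * n')" by (simp add: m' n' algebra_simps)
    also have "\<dots> \<longleftrightarrow> m' dvd i * n'" using d0 by simp
    also have "\<dots> \<longleftrightarrow> m' dvd i" using cop by (simp add: coprime_commute coprime_dvd_mult_left_iff)
    finally show ?thesis .
  qed
  have "{i \<in> {..<m}. m dvd i * n} = (\<lambda>k. k * m') ` {..<d}"
  proof (rule Set.set_eqI, rule HOL.iffI)
    fix i assume i: "i \<in> {i \<in> {..<m}. m dvd i * n}"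
    then have "m' dvd i" using iff by blast
    then obtain k where k: "i = k * m'" by (metis dvdE mult.commute)
    have "k * m' < d * m'" using i k m' by (simp add: mult.commute)
    then have "k < d" by simp
    then show "i \<in> (\<lambda>k. k * m') ` {..<d}" using k by blast
  next
    fix i assume "i \<in> (\<lambda>k. k * m') ` {..<d}"
    then obtain k where k: "k < d" "i = k * m'" by blast
    then have "i < m" using mp m' by simp
    moreover have "m dvd i * n" using iff k by simp
    ultimately show "i \<in> {i \<in> {..<m}. m dvd i * n}" by simp
  qed
  moreover have "inj_on (\<lambda>k. k * m') {..<d}" using mp by (auto simp: inj_on_def)
  ultimately show ?thesis by (simp add: card_image d_def)
qed

lemma count_unity:
  fixes F (structure)
  assumes F: "field F" and fin: "finite (carrier F)" and n: "n \<ge> 1"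
  shows "card {Z \<in> carrier F. Z [^]\<^bsub>F\<^esub> n = \<one>\<^bsub>F\<^esub>} = gcd n (order F - 1)"
proof -
  interpret field F by (rule F)
  obtain a where a: "a \<in> carrier (mult_of F)" and gen: "carrier (mult_of F) = {a [^] i | i::nat. i \<in> UNIV}"
    using finite_field_mult_group_has_gen[OF fin] by blast
  interpret G: group "mult_of F" by (rule field_mult_group)
  have finG: "finite (carrier (mult_of F))" using fin by simp
  have powG: "x [^]\<^bsub>mult_of F\<^esub> (k::nat) = x [^] k" for x k by (simp add: nat_pow_mult_of)
  define m where "m = G.ord a"
  have m1: "m \<ge> 1" using G.ord_ge_1[OF finG a] by (simp add: m_def)
  have gen': "carrier (mult_of F) = (\<lambda>i. a [^] i) ` {0..m - 1}"
  proof -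
    have "{a [^]\<^bsub>mult_of F\<^esub> x | x. x \<in> (UNIV :: nat set)} = {a [^]\<^bsub>mult_of F\<^esub> x | x. x \<in> {0 .. m - 1}}"
      using G.ord_elems[OF finG a] by (simp add: m_def)
    then have "{a [^] x | x. x \<in> (UNIV :: nat set)} = {a [^] x | x. x \<in> {0 .. m - 1}}"
      by (simp only: powG)
    moreover have "{a [^] x | x. x \<in> {0 .. m - 1}} = (\<lambda>i. a [^] i) ` {0..m - 1}" by blast
    ultimately show ?thesis using gen by simp
  qed
  have inj: "inj_on (\<lambda>i. a [^] i) {0..m - 1}"
    using G.ord_inj[OF a] by (simp add: powG m_def)
  have "order (mult_of F) = m"
    unfolding order_def gen' card_image[OF inj] using m1 by simp
  then have mord: "m = order F - 1" using order_mult_of[OF fin] by simp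
  have set: "{Z \<in> carrier F. Z [^] n = \<one>} = (\<lambda>i. a [^] i) ` {i \<in> {0..m - 1}. m dvd i * n}"
  proof (rule Set.set_eqI, rule HOL.iffI)
    fix Z assume Z: "Z \<in> {Z \<in> carrier F. Z [^] n = \<one>}"
    then have "Z \<noteq> \<zero>" using n nat_pow_zero[of n] by auto
    then have "Z \<in> carrier (mult_of F)" using Z by simp
    then have "Z \<in> (\<lambda>i. a [^] i) ` {0..m - 1}" using gen' by blast
    then obtain i where i: "i \<in> {0..m - 1}" "Z = a [^] i" by blast
    have "a [^]\<^bsub>mult_of F\<^esub> (i * n) = \<one>\<^bsub>mult_of F\<^esub>"
      using Z i a by (simp add: powG nat_pow_pow)
    then have "m dvd i * n" using G.pow_eq_id[OF a] by (simp add: m_def)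
    then show "Z \<in> (\<lambda>i. a [^] i) ` {i \<in> {0..m - 1}. m dvd i * n}" using i by auto
  next
    fix Z assume "Z \<in> (\<lambda>i. a [^] i) ` {i \<in> {0..m - 1}. m dvd i * n}"
    then obtain i where i: "m dvd i * n" "Z = a [^] i" by auto
    have "a [^]\<^bsub>mult_of F\<^esub> (i * n) = \<one>\<^bsub>mult_of F\<^esub>"
      using G.pow_eq_id[OF a] i by (simp add: m_def)
    then have "Z [^] n = \<one>" using a i by (simp add: powG nat_pow_pow)
    moreover have "Z \<in> carrier F" using a i by simp
    ultimately show "Z \<in> {Z \<in> carrier F. Z [^] n = \<one>}" by simp
  qed
  have "card {Z \<in> carrier F. Z [^] n = \<one>} = card {i \<in> {0..m - 1}. m dvd i * n}"
    unfolding set by (rule card_image) (rule inj_on_subset[OF inj], blast)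
  also have "{i \<in> {0..m - 1}. m dvd i * n} = {i \<in> {..<m}. m dvd i * n}" using m1 by auto
  also have "card \<dots> = gcd n m" using count_dvd[of m n] m1 by linarith
  finally show ?thesis unfolding mord .
qed


lemma count_roots:
  fixes F (structure)
  assumes F: "field F" and fin: "finite (carrier F)" and n: "n \<ge> 1"
    and C: "C \<in> carrier F" "C \<noteq> \<zero>"
  shows "card {Y \<in> carrier F. Y [^] n = C} =
    (if \<exists>B\<in>carrier F. B [^] n = C then gcd n (order F - 1) else 0)"
proof (cases "\<exists>B\<in>carrier F. B [^] n = C")
  case False
  have e: "{Y \<in> carrier F. Y [^] n = C} = {}" using False by blast
  show ?thesis using False unfolding e by simp
next
  case True
  interpret field F by (rule F)
  from True obtain B where B: "B \<in> carrier F" "B [^] n = C" by blast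
  have B0: "B \<noteq> \<zero>" using B C n nat_pow_zero[of n] by auto
  have BU: "B \<in> Units F" using B B0 field_Units by auto
  have img: "{Y \<in> carrier F. Y [^] n = C} = (\<lambda>Z. Z \<otimes> B) ` {Z \<in> carrier F. Z [^] n = \<one>}"
  proof (rule Set.set_eqI, rule HOL.iffI)
    fix Y assume Y: "Y \<in> {Y \<in> carrier F. Y [^] n = C}"
    define Z where "Z = Y \<otimes> inv B"
    have Zc: "Z \<in> carrier F" using Y BU by (simp add: Z_def)
    have iB: "inv B \<in> carrier F" using BU by (rule Units_inv_closed)
    have "Z \<otimes> B = Y \<otimes> (inv B \<otimes> B)" using Y iB B by (simp add: Z_def m_assoc)
    then have "Z \<otimes> B = Y" using Y BU by simp
    moreover have "Z [^] n = \<one>"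
    proof -
      have "Z [^] n = Y [^] n \<otimes> inv B [^] n" using Y BU by (simp add: Z_def pow_mult_distrib m_comm)
      also have "\<dots> = B [^] n \<otimes> inv B [^] n" using Y B by simp
      also have "\<dots> = (B \<otimes> inv B) [^] n"
        by (rule pow_mult_distrib[symmetric]) (use B iB in \<open>simp_all add: m_comm\<close>)
      also have "\<dots> = \<one>" using BU by simp
      finally show ?thesis .
    qed
    ultimately show "Y \<in> (\<lambda>Z. Z \<otimes> B) ` {Z \<in> carrier F. Z [^] n = \<one>}" using Zc by force
  next
    fix Y assume "Y \<in> (\<lambda>Z. Z \<otimes> B) ` {Z \<in> carrier F. Z [^] n = \<one>}"
    then obtain Z where Z: "Z \<in> carrier F" "Z [^] n = \<one>" "Y = Z \<otimes> B" by blast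
    have "Y [^] n = C" using Z B C(1) by (simp add: pow_mult_distrib m_comm)
    then show "Y \<in> {Y \<in> carrier F. Y [^] n = C}" using Z B by simp
  qed
  have inj: "inj_on (\<lambda>Z. Z \<otimes> B) {Z \<in> carrier F. Z [^] n = \<one>}"
  proof (rule inj_onI)
    fix Z1 Z2 assume "Z1 \<in> {Z \<in> carrier F. Z [^] n = \<one>}" "Z2 \<in> {Z \<in> carrier F. Z [^] n = \<one>}"
      "Z1 \<otimes> B = Z2 \<otimes> B"
    then show "Z1 = Z2" using m_rcancel[OF B0 B(1)] by simp
  qed
  have "card {Y \<in> carrier F. Y [^] n = C} = card {Z \<in> carrier F. Z [^] n = \<one>}"
    unfolding img by (rule card_image[OF inj])
  also have "\<dots> = gcd n (order F - 1)" by (rule count_unity[OF F fin n])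
  finally show ?thesis using True by simp
qed

context dval begin

abbreviation "Q \<equiv> valR v Quot max_ideal v"

lemma field_Q: "field Q"
  using maximalideal.quotient_is_field[OF max_ideal_maximal cring_valR] .

lemma ideal_m: "ideal (max_ideal v) (valR v)"
  using max_ideal_maximal by (rule maximalideal.axioms(1))

lemma residue_alt: "x \<in> val_ring v \<Longrightarrow> residue v x = {y. vge v 0 y \<and> vge v 1 (x - y)}"
  by (auto simp: residue_def res_rel_def val_ring_iff max_ideal_iff)

lemma coset_eq: assumes x: "x \<in> val_ring v" shows "max_ideal v +>\<^bsub>valR v\<^esub> x = residue v x"
proof -
  have "max_ideal v +>\<^bsub>valR v\<^esub> x = (\<Union>h\<in>max_ideal v. {h + x})"
    by (simp add: a_r_coset_def')
  also have "\<dots> = residue v x"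
  proof (rule Set.set_eqI, rule HOL.iffI)
    fix y assume "y \<in> (\<Union>h\<in>max_ideal v. {h + x})"
    then obtain h where h: "vge v 1 h" "y = h + x" by (auto simp: max_ideal_iff)
    have "vge v 0 y" using h x vge_1_0[OF h(1)] by (auto simp: val_ring_iff intro: vge_add)
    moreover have "vge v 1 (x - y)" using h by simp
    ultimately show "y \<in> residue v x" using x by (simp add: residue_alt)
  next
    fix y assume "y \<in> residue v x"
    then have y: "vge v 0 y" "vge v 1 (x - y)" using x by (auto simp: residue_alt)
    have "y = (y - x) + x" by simp
    moreover have "y - x \<in> max_ideal v" using y(2) vge_uminus[of 1 "x - y"] by (simp add: max_ideal_iff)
    ultimately show "y \<in> (\<Union>h\<in>max_ideal v. {h + x})" by blast
  qed
  finally show ?thesis .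
qed

lemma carrier_Q: "carrier Q = residue_field v"
proof -
  have "carrier Q = (\<Union>a\<in>val_ring v. {max_ideal v +>\<^bsub>valR v\<^esub> a})"
    by (simp add: FactRing_def A_RCOSETS_def')
  also have "\<dots> = (\<Union>a\<in>val_ring v. {residue v a})" using coset_eq by simp
  also have "\<dots> = residue_field v"
    by (simp add: residue_field_def quotient_def residue_def)
  finally show ?thesis .
qed

lemma res_eq: "x \<in> val_ring v \<Longrightarrow> y \<in> val_ring v \<Longrightarrow> residue v x = residue v y \<longleftrightarrow> vge v 1 (x - y)"
proof
  assume x: "x \<in> val_ring v" and y: "y \<in> val_ring v" and e: "residue v x = residue v y"
  have "x \<in> residue v x" using x by (simp add: residue_alt val_ring_iff)
  then show "vge v 1 (x - y)" using e y vge_uminus[of 1 "y - x"] by (simp add: residue_alt)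
next
  assume x: "x \<in> val_ring v" and y: "y \<in> val_ring v" and d: "vge v 1 (x - y)"
  show "residue v x = residue v y"
  proof (rule Set.set_eqI)
    fix z
    have "vge v 1 (x - z) \<longleftrightarrow> vge v 1 (y - z)"
    proof
      assume a: "vge v 1 (x - z)"
      have "(x - z) - (x - y) = y - z" by simp
      then show "vge v 1 (y - z)" using vge_diff[OF a d] by simp
    next
      assume a: "vge v 1 (y - z)"
      have "(y - z) + (x - y) = x - z" by simp
      then show "vge v 1 (x - z)" using vge_add[OF a d] by simp
    qed
    then show "z \<in> residue v x \<longleftrightarrow> z \<in> residue v y" using x y by (simp add: residue_alt)
  qed
qed

lemma pow_valR: "x [^]\<^bsub>valR v\<^esub> (k::nat) = x ^ k"
  by (induction k) simp_all

lemma res_pow: assumes x: "x \<in> val_ring v" shows "residue v x [^]\<^bsub>Q\<^esub> (k::nat) = residue v (x ^ k)"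
proof -
  have xk: "x ^ k \<in> val_ring v" using x vge_pow by (simp add: val_ring_iff)
  have "ring_hom_ring (valR v) Q ((+>\<^bsub>valR v\<^esub>) (max_ideal v))"
    by (rule ideal.rcos_ring_hom_ring[OF ideal_m])
  from ring_hom_ring.hom_nat_pow[OF this, of x k] x
  have "max_ideal v +>\<^bsub>valR v\<^esub> (x ^ k) = (max_ideal v +>\<^bsub>valR v\<^esub> x) [^]\<^bsub>Q\<^esub> k"
    by (simp add: pow_valR)
  then show ?thesis using coset_eq[OF x] coset_eq[OF xk] by simp
qed

lemma zero_Q: "\<zero>\<^bsub>Q\<^esub> = residue v 0"
  by (auto simp: FactRing_def residue_alt val_ring_iff max_ideal_iff intro: vge_1_0)

lemma res_in: "x \<in> val_ring v \<Longrightarrow> residue v x \<in> carrier Q"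
  by (auto simp: carrier_Q residue_field_def quotient_def residue_def)

lemma res_surj: "Y \<in> carrier Q \<Longrightarrow> \<exists>y\<in>val_ring v. Y = residue v y"
  by (auto simp: carrier_Q residue_field_def quotient_def residue_def)

end

lemma coeff_pcompose_lin: "coeff (pcompose f [:0, e:]) j = coeff f j * (e::'a::comm_ring_1) ^ j"
proof (induction f arbitrary: j rule: pCons_induct)
  case 0 then show ?case by simp
next
  case (pCons a p)
  have m: "[:0, e:] * r = pCons 0 (Polynomial.smult e r)" for r :: "'a poly" by simp
  show ?case
  proof (cases j)
    case 0 then show ?thesis by (simp add: pcompose_pCons m)
  next
    case (Suc i) then show ?thesis by (simp add: pcompose_pCons m pCons.IH algebra_simps)
  qed
qed

context cdval begin

lemma roots_count:
  fixes f :: "'a poly" and \<pi> :: 'a and n :: nat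
  assumes unif: "\<pi> \<noteq> 0" "v \<pi> = 1"
    and n1: "n \<ge> 1" and nunit: "of_nat n \<notin> max_ideal v"
    and deg: "degree f = n" and lc: "coeff f n = 1" and cA: "\<forall>i. vge v 0 (coeff f i)"
    and a0: "coeff f 0 \<noteq> 0"
    and sl: "\<forall>j. 0 < j \<longrightarrow> j < n \<longrightarrow> coeff f j = 0 \<or> int n * v (coeff f j) > int (n - j) * v (coeff f 0)"
    and dvd: "int n dvd v (coeff f 0)"
  shows "card {x. x \<noteq> 0 \<and> poly f x = 0} =
     card {Y \<in> carrier Q. Y [^]\<^bsub>Q\<^esub> n = residue v (- (coeff f 0 / \<pi> powi v (coeff f 0)))}"
proof -
  define a where "a = coeff f 0"
  define l where "l = v a"
  obtain s where s: "l = int n * s" using dvd unfolding l_def a_def by (auto elim!: dvdE)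
  have l0: "l \<ge> 0" using cA[rule_format, of 0] a0 by (simp add: vge_def l_def a_def)
  have s0: "s \<ge> 0" using l0 s n1 by (simp add: zero_le_mult_iff)
  define e where "e = \<pi> powi s"
  have e0: "e \<noteq> 0" using unif by (simp add: e_def)
  have ve: "v e = s" using unif by (simp add: e_def vpowi)
  have en: "e ^ n = \<pi> powi l" by (simp add: e_def s power_int_power' mult.commute)
  define u where "u = a / \<pi> powi l"
  have u_alt: "u = a / e ^ n" by (simp add: u_def en)
  have en0: "e ^ n \<noteq> 0" using e0 by simp
  have ven: "v (e ^ n) = l" using e0 ve s by (simp add: vpow)
  have u0: "u \<noteq> 0" "v u = 0" using a0 en0 ven by (auto simp: u_alt vdiv a_def l_def)
  have uA: "vge v 0 u" using u0 by (simp add: vge_def)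
  define g where "g = Polynomial.smult (inverse (e ^ n)) (pcompose f [:0, e:])"
  have g1: "poly g y = poly f (e * y) / e ^ n" for y
    by (simp add: g_def poly_pcompose divide_inverse mult.commute)
  have g2: "coeff g j = coeff f j * e ^ j / e ^ n" for j
    by (simp add: g_def coeff_pcompose_lin divide_inverse mult.commute)
  define h :: "'a poly" where "h = monom 1 n + [:u:]"
  have ch: "coeff h j = (if j = n then 1 else 0) + (if j = 0 then u else 0)" for j
    by (simp add: h_def coeff_pCons split: nat.split)
  have g3: "vge v 1 (coeff g j - coeff h j)" for j
  proof -
    consider "j > n" | "j = n" | "j = 0" | "0 < j" "j < n" by linarith
    then show ?thesis
    proof cases
      case 1
      then have "coeff f j = 0" using deg by (simp add: coeff_eq_0)
      then show ?thesis using 1 by (simp add: g2 ch)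
    next
      case 2 then show ?thesis using n1 lc en0 by (simp add: g2 ch)
    next
      case 3 then show ?thesis using n1 by (simp add: g2 ch u_alt a_def)
    next
      case 4
      show ?thesis
      proof (cases "coeff f j = 0")
        case True then show ?thesis using 4 by (simp add: g2 ch)
      next
        case False
        then have "int n * v (coeff f j) > int (n - j) * l"
          using sl 4 by (auto simp: l_def a_def)
        then have "int n * v (coeff f j) > int n * ((int n - int j) * s)"
          using 4 by (simp add: s of_nat_diff algebra_simps)
        then have "v (coeff f j) > (int n - int j) * s" using n1 by simp
        then have "v (coeff f j) + int j * s - int n * s \<ge> 1" by (simp add: algebra_simps)
        moreover have "v (coeff g j) = v (coeff f j) + int j * s - int n * s"
          using False e0 by (simp add: g2 vdiv vmult vpow ve)
        moreover have "coeff h j = 0" using 4 by (simp add: ch)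
        ultimately show ?thesis by (simp add: vge_def)
      qed
    qed
  qed
  have g4: "\<forall>j. vge v 0 (coeff h j)" using uA n1 by (simp add: ch)
  have g5: "\<forall>j. vge v 0 (coeff g j)"
  proof
    fix j
    have "coeff g j = coeff h j + (coeff g j - coeff h j)" by simp
    then show "vge v 0 (coeff g j)" using vge_add[OF g4[rule_format] vge_1_0[OF g3]] by metis
  qed
  have g6: "vge v 1 (poly g y - (y ^ n + u))" if "vge v 0 y" for y
  proof -
    have "poly g y - poly h y = poly (g - h) y" by simp
    moreover have "vge v 1 (poly (g - h) y)" using g3 that by (intro poly_vge) simp_all
    moreover have "poly h y = y ^ n + u" by (simp add: h_def poly_monom)
    ultimately show ?thesis by simp
  qed
  have g7: "vge v 1 (poly (pderiv g) y - of_nat n * y ^ (n - 1))" if "vge v 0 y" for y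
  proof -
    have "poly (pderiv g) y - poly (pderiv h) y = poly (pderiv (g - h)) y" by (simp add: pderiv_diff)
    moreover have "vge v 1 (poly (pderiv (g - h)) y)"
      using g3 that by (intro poly_vge) (auto simp: coeff_pderiv simp del: of_nat_Suc intro!: vge_mult0')
    moreover have "poly (pderiv h) y = of_nat n * y ^ (n - 1)"
      by (simp add: h_def pderiv_add pderiv_monom poly_monom pderiv_pCons)
    ultimately show ?thesis by simp
  qed
  have nU: "of_nat n \<noteq> (0::'a)" "v (of_nat n :: 'a) = 0"
    using nunit vge_of_nat[of n] by (auto simp: max_ideal_iff vge_def)
  have unitd: "poly (pderiv g) y \<noteq> 0 \<and> v (poly (pderiv g) y) = 0" if "y \<noteq> 0" "v y = 0" for y
  proof -
    have t: "of_nat n * y ^ (n - 1) \<noteq> 0" "v (of_nat n * y ^ (n - 1)) = 0"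
      using nU that by (auto simp: vmult vpow)
    have yA: "vge v 0 y" using that by (simp add: vge_def)
    have "poly (pderiv g) y = of_nat n * y ^ (n - 1) + (poly (pderiv g) y - of_nat n * y ^ (n - 1))" by simp
    then show ?thesis using unit_add[OF t g7[OF yA]] by metis
  qed
  define Rf where "Rf = {x. x \<noteq> 0 \<and> poly f x = 0}"
  define C where "C = residue v (- u)"
  define S where "S = {Y \<in> carrier Q. Y [^]\<^bsub>Q\<^esub> n = C}"
  define \<phi> where "\<phi> = (\<lambda>x. residue v (x / e))"
  have mu: "- u \<in> val_ring v" using uA by (simp add: val_ring_iff)
  have rootinfo: "x / e \<noteq> 0 \<and> v (x / e) = 0 \<and> poly g (x / e) = 0" if "x \<in> Rf" for x
  proof -
    have x: "x \<noteq> 0" "poly f x = 0" using that by (auto simp: Rf_def)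
    have "int n * v x = l" using newton[OF n1 deg lc a0 _ x] sl by (simp add: l_def a_def)
    then have "v x = s" using s n1 by simp
    then show ?thesis using x e0 ve by (simp add: vdiv g1)
  qed
  have in_S: "\<phi> x \<in> S" if "x \<in> Rf" for x
  proof -
    define y where "y = x / e"
    have y: "y \<noteq> 0" "v y = 0" "poly g y = 0" using rootinfo[OF that] by (auto simp: y_def)
    have yA: "y \<in> val_ring v" using y by (simp add: val_ring_iff vge_def)
    have ynA: "y ^ n \<in> val_ring v" using yA vge_pow by (simp add: val_ring_iff)
    have "vge v 0 y" using yA by (simp add: val_ring_iff)
    from g6[OF this] have "vge v 1 (0 - (y ^ n + u))" using y(3) by simp
    moreover have "0 - (y ^ n + u) = - (y ^ n - (- u))" by simp
    ultimately have "vge v 1 (y ^ n - (- u))" by (metis vge_uminus)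
    then have "residue v (y ^ n) = C" unfolding C_def using res_eq[OF ynA mu] by simp
    then show ?thesis using res_pow[OF yA] res_in[OF yA] by (simp add: S_def \<phi>_def y_def)
  qed
  have inj: "inj_on \<phi> Rf"
  proof (rule inj_onI)
    fix x1 x2 assume x: "x1 \<in> Rf" "x2 \<in> Rf" "\<phi> x1 = \<phi> x2"
    have y1: "x1 / e \<noteq> 0" "v (x1 / e) = 0" "poly g (x1 / e) = 0" using rootinfo[OF x(1)] by auto
    have y2: "x2 / e \<noteq> 0" "v (x2 / e) = 0" "poly g (x2 / e) = 0" using rootinfo[OF x(2)] by auto
    have A1: "vge v 0 (x1 / e)" "vge v 0 (x2 / e)" using y1 y2 by (simp_all add: vge_def)
    then have "vge v 1 (x1 / e - x2 / e)" using res_eq x(3) by (simp add: \<phi>_def val_ring_iff)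
    then have "x1 / e = x2 / e"
      using hensel_uniq[OF g5 A1 _ y1(3) y2(3)] unitd[OF y2(1,2)] by blast
    then show "x1 = x2" using e0 by simp
  qed
  have surj: "S \<subseteq> \<phi> ` Rf"
  proof
    fix Y assume Y: "Y \<in> S"
    then obtain y0 where y0: "y0 \<in> val_ring v" "Y = residue v y0" using res_surj by (auto simp: S_def)
    have y0n: "y0 ^ n \<in> val_ring v" using y0 vge_pow by (simp add: val_ring_iff)
    have "residue v (y0 ^ n) = C" using Y y0 res_pow by (simp add: S_def)
    then have d: "vge v 1 (y0 ^ n + u)" using res_eq[OF y0n mu] by (simp add: C_def)
    have y0u: "y0 \<noteq> 0 \<and> v y0 = 0"
    proof (rule ccontr)
      assume "\<not> (y0 \<noteq> 0 \<and> v y0 = 0)"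
      then have "vge v 1 y0" using y0 by (auto simp: val_ring_iff vge_def)
      then have "vge v 1 (y0 ^ n)" using vge_pow1 n1 by blast
      then have "vge v 1 ((y0 ^ n + u) - y0 ^ n)" using vge_diff d by blast
      then show False using u0 by (simp add: vge_def)
    qed
    have y0A: "vge v 0 y0" using y0 by (simp add: val_ring_iff)
    have "poly g y0 = (poly g y0 - (y0 ^ n + u)) + (y0 ^ n + u)" by simp
    then have gy0: "vge v 1 (poly g y0)" using vge_add[OF g6[OF y0A] d] by metis
    obtain y where y: "vge v 0 y" "vge v 1 (y - y0)" "poly g y = 0"
      using hensel[OF g5 y0A gy0] unitd y0u by blast
    have "y = y0 + (y - y0)" by simp
    then have yu: "y \<noteq> 0" "v y = 0" using unit_add[of y0 "y - y0"] y0u y(2) by metis+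
    define x where "x = e * y"
    have "poly f x = 0" using y(3) g1[of y] en0 e0 by (auto simp: x_def)
    then have xR: "x \<in> Rf" using yu e0 by (simp add: Rf_def x_def)
    have yA': "y \<in> val_ring v" using y(1) by (simp add: val_ring_iff)
    have "\<phi> x = residue v y0" using e0 res_eq[OF yA' y0(1)] y(2) by (simp add: \<phi>_def x_def)
    then show "Y \<in> \<phi> ` Rf" using xR y0 by blast
  qed
  have "\<phi> ` Rf = S" using in_S surj by blast
  then have "card Rf = card S" using card_image[OF inj] by simp
  then show ?thesis by (simp add: Rf_def S_def C_def u_def l_def a_def)
qed

end

theorem theorem4p5:
  fixes v :: "'a::field \<Rightarrow> int" and \<pi> :: 'a and p q n :: nat and f :: "'a poly"
  assumes dv: "discrete_valuation v"
    and compl: "val_complete v"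
    and unif: "\<pi> \<noteq> 0" "v \<pi> = 1"
    and fin: "finite (residue_field v)"
    and q_def: "q = card (residue_field v)"
    and p_char: "prime p" "of_nat p \<in> max_ideal v"
    and n_pos: "n \<ge> 1"
    and p_ndvd: "\<not> p dvd n"
    and monic: "degree f = n" "lead_coeff f = 1"
    and coeffs_A: "\<forall>i. coeff f i \<in> val_ring v"
    and a0: "coeff f 0 \<noteq> 0"
    and slope: "\<forall>i\<in>{1..n-1}. coeff f (n - i) = 0 \<or>
                   real_of_int (v (coeff f (n - i))) > real i * real_of_int (v (coeff f 0)) / real n"
  shows "card {x. x \<noteq> 0 \<and> poly f x = 0} = card {x::'a. x \<noteq> 0 \<and> x ^ n + coeff f 0 = 0}
       \<and> (\<not> int n dvd v (coeff f 0) \<longrightarrow> card {x. x \<noteq> 0 \<and> poly f x = 0} = 0)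
       \<and> (int n dvd v (coeff f 0) \<longrightarrow>
            card {x. x \<noteq> 0 \<and> poly f x = 0} =
              (if is_nth_power_res v n (residue v (- (coeff f 0 / \<pi> powi v (coeff f 0))))
               then gcd n (q - 1) else 0))"
proof -
  interpret cdval v by unfold_locales (rule dv, rule compl)
  define a where "a = coeff f 0"
  define l where "l = v a"
  have lc: "coeff f n = 1" using monic by simp
  have cA: "\<forall>i. vge v 0 (coeff f i)" using coeffs_A by (simp add: val_ring_iff)
  have sl: "\<forall>j. 0 < j \<longrightarrow> j < n \<longrightarrow> coeff f j = 0 \<or> int n * v (coeff f j) > int (n - j) * v (coeff f 0)"
  proof (intro allI impI)
    fix j assume j: "0 < j" "j < n"
    have jj: "n - j \<in> {1..n-1}" using j by auto
    have nj: "n - (n - j) = j" using j by simp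
    from slope[rule_format, OF jj] nj
    have "coeff f j = 0 \<or> real_of_int (v (coeff f j)) > real (n - j) * real_of_int (v (coeff f 0)) / real n"
      by simp
    moreover have "real (n - j) * real_of_int (v (coeff f 0)) / real n < real_of_int (v (coeff f j))
       \<Longrightarrow> int (n - j) * v (coeff f 0) < int n * v (coeff f j)"
    proof -
      assume h: "real (n - j) * real_of_int (v (coeff f 0)) / real n < real_of_int (v (coeff f j))"
      have "real n > 0" using n_pos by simp
      then have "real (n - j) * real_of_int (v (coeff f 0)) < real_of_int (v (coeff f j)) * real n"
        using h by (simp add: pos_divide_less_eq)
      then have "real_of_int (int (n - j) * v (coeff f 0)) < real_of_int (int n * v (coeff f j))"
        by (simp add: mult.commute)
      then show ?thesis by (simp only: of_int_less_iff)
    qed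
    ultimately show "coeff f j = 0 \<or> int n * v (coeff f j) > int (n - j) * v (coeff f 0)" by blast
  qed
  have nunit: "of_nat n \<notin> max_ideal v"
  proof
    assume nm: "of_nat n \<in> max_ideal v"
    have "coprime p n" by (rule prime_imp_coprime[OF p_char(1) p_ndvd])
    then have "gcd (int p) (int n) = 1" by (simp add: coprime_iff_gcd_eq_1 gcd_int_int_eq)
    then obtain x y where xy: "x * int p + y * int n = 1" using bezout_int[of "int p" "int n"] by metis
    have "(of_int (x * int p + y * int n) :: 'a) = of_int x * of_nat p + of_int y * of_nat n" by simp
    then have e1: "(1::'a) = of_int x * of_nat p + of_int y * of_nat n" using xy by simp
    have "vge v 1 (of_int x * of_nat p + of_int y * (of_nat n :: 'a))"
      using p_char(2) nm by (auto simp: max_ideal_iff intro!: vge_add vge_mult0')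
    then have "vge v 1 (1::'a)" using e1 by simp
    then show False by (simp add: vge_def)
  qed
  define f0 :: "'a poly" where "f0 = monom 1 n + [:a:]"
  have cf0: "coeff f0 j = (if j = n then 1 else 0) + (if j = 0 then a else 0)" for j
    by (simp add: f0_def coeff_pCons split: nat.split)
  have deg0: "degree f0 = n"
  proof -
    have "degree [:a:] < degree (monom (1::'a) n)" using n_pos by (simp add: degree_monom_eq)
    then show ?thesis unfolding f0_def by (simp add: degree_add_eq_left degree_monom_eq)
  qed
  have lc0: "coeff f0 n = 1" using n_pos by (simp add: cf0)
  have a00: "coeff f0 0 = a" using n_pos by (simp add: cf0)
  have cA0: "\<forall>i. vge v 0 (coeff f0 i)" using cA n_pos by (simp add: cf0 a_def)
  have sl0: "\<forall>j. 0 < j \<longrightarrow> j < n \<longrightarrow> coeff f0 j = 0 \<or> int n * v (coeff f0 j) > int (n - j) * v (coeff f0 0)"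
    by (simp add: cf0)
  have pf0: "poly f0 x = x ^ n + a" for x by (simp add: f0_def poly_monom)
  have set0: "{x::'a. x \<noteq> 0 \<and> x ^ n + coeff f 0 = 0} = {x. x \<noteq> 0 \<and> poly f0 x = 0}"
    by (simp add: pf0 a_def)
  have a0': "a \<noteq> 0" using a0 by (simp add: a_def)
  show ?thesis
  proof (cases "int n dvd l")
    case False
    have e1: "{x. x \<noteq> 0 \<and> poly f x = 0} = {}"
    proof -
      have "False" if "x \<noteq> 0" "poly f x = 0" for x
        using newton[OF n_pos monic(1) lc a0 sl that] False unfolding l_def a_def by (metis dvd_triv_left)
      then show ?thesis by blast
    qed
    have e2: "{x. x \<noteq> 0 \<and> poly f0 x = 0} = {}"
    proof -
      have "False" if "x \<noteq> 0" "poly f0 x = 0" for x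
      proof -
        have "int n * v x = v (coeff f0 0)" using newton[OF n_pos deg0 lc0 _ sl0 that] a0' a00 by simp
        then have "int n dvd l" using a00 unfolding l_def by (metis dvd_triv_left)
        then show False using False by simp
      qed
      then show ?thesis by blast
    qed
    show ?thesis using False unfolding set0 e1 e2 by (simp add: l_def a_def)
  next
    case True
    define u where "u = a / \<pi> powi l"
    define C where "C = residue v (- u)"
    have u0: "u \<noteq> 0" "v u = 0" using a0' unif by (auto simp: u_def vdiv vpowi l_def)
    have muA: "- u \<in> val_ring v" using u0 by (simp add: val_ring_iff vge_def)
    have c1: "card {x. x \<noteq> 0 \<and> poly f x = 0} = card {Y \<in> carrier Q. Y [^]\<^bsub>Q\<^esub> n = C}"
      using roots_count[OF unif n_pos nunit monic(1) lc cA a0 sl] True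
      by (simp add: C_def u_def l_def a_def)
    have c2: "card {x. x \<noteq> 0 \<and> poly f0 x = 0} = card {Y \<in> carrier Q. Y [^]\<^bsub>Q\<^esub> n = C}"
      using roots_count[OF unif n_pos nunit deg0 lc0 cA0 _ sl0] True a0' a00
      by (simp add: C_def u_def l_def)
    have finQ: "finite (carrier Q)" using fin by (simp add: carrier_Q)
    have ordQ: "order Q = q" by (simp add: order_def carrier_Q q_def)
    have Cin: "C \<in> carrier Q" using res_in[OF muA] by (simp add: C_def)
    have C0: "C \<noteq> \<zero>\<^bsub>Q\<^esub>"
    proof
      assume "C = \<zero>\<^bsub>Q\<^esub>"
      then have "residue v (- u) = residue v 0" by (simp add: C_def zero_Q)
      then have "vge v 1 (- u - 0)" using res_eq[OF muA] by (simp add: val_ring_iff)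
      then show False using u0 by (simp add: vge_def)
    qed
    have cnt: "card {Y \<in> carrier Q. Y [^]\<^bsub>Q\<^esub> n = C} =
       (if \<exists>B\<in>carrier Q. B [^]\<^bsub>Q\<^esub> n = C then gcd n (order Q - 1) else 0)"
      by (rule count_roots[OF field_Q finQ n_pos Cin C0])
    have ex: "(\<exists>B\<in>carrier Q. B [^]\<^bsub>Q\<^esub> n = C) \<longleftrightarrow> is_nth_power_res v n C"
    proof
      assume "\<exists>B\<in>carrier Q. B [^]\<^bsub>Q\<^esub> n = C"
      then obtain B where B: "B \<in> carrier Q" "B [^]\<^bsub>Q\<^esub> n = C" by blast
      then obtain b where b: "b \<in> val_ring v" "B = residue v b" using res_surj by blast
      then show "is_nth_power_res v n C" using B res_pow[OF b(1)] by (auto simp: is_nth_power_res_def)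
    next
      assume "is_nth_power_res v n C"
      then obtain b where b: "b \<in> val_ring v" "residue v (b ^ n) = C" by (auto simp: is_nth_power_res_def)
      then show "\<exists>B\<in>carrier Q. B [^]\<^bsub>Q\<^esub> n = C" using res_in[OF b(1)] res_pow[OF b(1)] by auto
    qed
    show ?thesis using True c1 c2 cnt ex unfolding set0
      by (simp add: ordQ C_def u_def l_def a_def)
  qed
qed

end
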